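(* Let $X=Y\cup Z$ where $Y\cap Z=\emptyset$, $Z$ is a $\sigma$-compact subspace of $X$ and $Y$ is a closed discrete subset of $X$. If $X$ is absolutely strongly star-Lindelöf and $|Y|<\mathfrak{b}$, then $X$ is selectively strongly star-Hurewicz.
   Context: All spaces are regular. $St(A,\mathcal{U})=\bigcup\{U\in\mathcal{U}:U\cap A\neq\emptyset\}$. $\mathfrak{b}$ is the bounding number. $X$ is absolutely strongly star-Lindelöf if for every open cover $\mathcal{U}$ and every dense $D\subseteq X$ there is a countable $C\subseteq D$ with $St(C,\mathcal{U})=X$. $X$ is selectively strongly star-Hurewicz if for every sequence $(\mathcal{U}_n)$ of open covers and every sequence $(D_n)$ of dense subsets there are finite $F_n\subseteq D_n$ such that every $x\in X$ lies in $St(F_n,\mathcal{U}_n)$ for all but finitely many $n$. *)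

theory Defs
  imports "HOL-Analysis.Analysis" "HOL-Library.Equipollence"
begin

definition star :: "'a set \<Rightarrow> 'a set set \<Rightarrow> 'a set" where
  "star A \<U> = \<Union>{U \<in> \<U>. U \<inter> A \<noteq> {}}"

definition open_cover_of :: "'a topology \<Rightarrow> 'a set set \<Rightarrow> bool" where
  "open_cover_of X \<U> \<longleftrightarrow> (\<forall>U\<in>\<U>. openin X U) \<and> \<Union>\<U> = topspace X"

definition dense_in :: "'a topology \<Rightarrow> 'a set \<Rightarrow> bool" where
  "dense_in X D \<longleftrightarrow> D \<subseteq> topspace X \<and> X closure_of D = topspace X"

definition sigma_compact_in :: "'a topology \<Rightarrow> 'a set \<Rightarrow> bool" where
  "sigma_compact_in X Z \<longleftrightarrow>
     (\<exists>\<K>. countable \<K> \<and> (\<forall>K\<in>\<K>. compactin X K) \<and> Z = \<Union>\<K>)"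

definition absolutely_strongly_star_Lindelof :: "'a topology \<Rightarrow> bool" where
  "absolutely_strongly_star_Lindelof X \<longleftrightarrow>
     (\<forall>\<U> D. open_cover_of X \<U> \<and> dense_in X D \<longrightarrow>
        (\<exists>C. C \<subseteq> D \<and> countable C \<and> star C \<U> = topspace X))"

definition selectively_strongly_star_Hurewicz :: "'a topology \<Rightarrow> bool" where
  "selectively_strongly_star_Hurewicz X \<longleftrightarrow>
     (\<forall>\<U> :: nat \<Rightarrow> 'a set set. \<forall>D :: nat \<Rightarrow> 'a set.
        (\<forall>n. open_cover_of X (\<U> n)) \<and> (\<forall>n. dense_in X (D n)) \<longrightarrow>
        (\<exists>F :: nat \<Rightarrow> 'a set. (\<forall>n. finite (F n) \<and> F n \<subseteq> D n) \<and>
           (\<forall>x\<in>topspace X. \<forall>\<^sub>F n in sequentially. x \<in> star (F n) (\<U> n))))"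

definition bounded_family :: "(nat \<Rightarrow> nat) set \<Rightarrow> bool" where
  "bounded_family F \<longleftrightarrow> (\<exists>g. \<forall>f\<in>F. \<forall>\<^sub>F n in sequentially. f n \<le> g n)"

text \<open>|A| < \<b>, where \<b> is the least cardinality of an unbounded family:
  no unbounded family has cardinality at most |A|.\<close>
definition card_less_bounding_number :: "'a set \<Rightarrow> bool" where
  "card_less_bounding_number A \<longleftrightarrow>
     (\<forall>F :: (nat \<Rightarrow> nat) set. \<not> bounded_family F \<longrightarrow> \<not> (F \<lesssim> A))"

end

theory Submission
  imports Defs
begin

lemma star_mono: "A \<subseteq> B \<Longrightarrow> star A U \<subseteq> star B U"
  unfolding star_def by blast
lemma star_mem: "x \<in> star A U \<longleftrightarrow> (\<exists>V\<in>U. x \<in> V \<and> V \<inter> A \<noteq> {})"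
  unfolding star_def by blast
lemma compact_star:
  assumes K: "compactin X K" and U: "open_cover_of X \<U>" and D: "dense_in X D"
  shows "\<exists>G. finite G \<and> G \<subseteq> D \<and> K \<subseteq> star G \<U>"
proof -
  have ks: "K \<subseteq> topspace X" using K by (rule compactin_subset_topspace)
  have op: "\<forall>V\<in>\<U>. openin X V" and cov: "\<Union>\<U> = topspace X"
    using U unfolding open_cover_of_def by auto
  have "K \<subseteq> \<Union>\<U>" using ks cov by simp
  then obtain \<F> where F: "finite \<F>" "\<F> \<subseteq> \<U>" "K \<subseteq> \<Union>\<F>"
    using K op unfolding compactin_def by blast
  have dd: "\<exists>d. d \<in> V \<inter> D" if "V \<in> \<F>" "V \<noteq> {}" for V
  proof -
    have "openin X V" using that F(2) op by blast
    moreover have "X closure_of D = topspace X" using D unfolding dense_in_def by simp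
    ultimately have "D \<inter> V \<noteq> {}" using that(2) dense_intersects_open by metis
    then show ?thesis by blast
  qed
  define c where "c V = (SOME d. d \<in> V \<inter> D)" for V
  have cV: "c V \<in> V \<inter> D" if "V \<in> \<F>" "V \<noteq> {}" for V
    unfolding c_def using dd[OF that] by (rule someI_ex)
  define G where "G = c ` {V\<in>\<F>. V \<noteq> {}}"
  have "finite G" using F(1) unfolding G_def by simp
  moreover have "G \<subseteq> D" unfolding G_def using cV by blast
  moreover have "K \<subseteq> star G \<U>"
  proof
    fix x assume "x \<in> K"
    then obtain V where V: "V \<in> \<F>" "x \<in> V" using F(3) by blast
    then have "V \<noteq> {}" by blast
    then have "c V \<in> V" "c V \<in> G" using V cV unfolding G_def by auto
    then show "x \<in> star G \<U>" unfolding star_mem using V F(2) by blast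
  qed
  ultimately show ?thesis by blast
qed
theorem mainTheorem7:
  fixes X :: "'a topology" and Y Z :: "'a set"
  assumes "regular_space X" and "t1_space X"
    and "topspace X = Y \<union> Z" and "Y \<inter> Z = {}"
    and "sigma_compact_in X Z"
    and "closedin X Y" and "subtopology X Y = discrete_topology Y"
    and "absolutely_strongly_star_Lindelof X"
    and "card_less_bounding_number Y"
  shows "selectively_strongly_star_Hurewicz X"
  unfolding selectively_strongly_star_Hurewicz_def
proof (intro allI impI)
  fix \<U> :: "nat \<Rightarrow> 'a set set" and D :: "nat \<Rightarrow> 'a set"
  assume H: "(\<forall>n. open_cover_of X (\<U> n)) \<and> (\<forall>n. dense_in X (D n))"
  show "\<exists>F. (\<forall>n. finite (F n) \<and> F n \<subseteq> D n) \<and>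
           (\<forall>x\<in>topspace X. \<forall>\<^sub>F n in sequentially. x \<in> star (F n) (\<U> n))"
  proof (cases "topspace X = {}")
    case True
    show ?thesis by (rule exI[of _ "\<lambda>n. {}"]) (simp add: True)
  next
    case ne: False
    have "\<forall>n. \<exists>C. C \<subseteq> D n \<and> countable C \<and> star C (\<U> n) = topspace X"
    proof
      fix n
      have "open_cover_of X (\<U> n) \<and> dense_in X (D n)" using H by simp
      then show "\<exists>C. C \<subseteq> D n \<and> countable C \<and> star C (\<U> n) = topspace X"
        using assms(8) unfolding absolutely_strongly_star_Lindelof_def by simp
    qed
    from choice[OF this] obtain C where C0:
      "\<forall>n. C n \<subseteq> D n \<and> countable (C n) \<and> star (C n) (\<U> n) = topspace X" by blast
    have C: "\<And>n. C n \<subseteq> D n" "\<And>n. countable (C n)"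
      "\<And>n. star (C n) (\<U> n) = topspace X" using C0 by simp_all
    have Cne: "C n \<noteq> {}" for n
    proof
      assume "C n = {}"
      then have "star (C n) (\<U> n) = {}" unfolding star_def by blast
      then show False using C(3)[of n] ne by argo
    qed
    define e where "e n k = from_nat_into (C n) k" for n k
    have eC: "e n k \<in> C n" for n k unfolding e_def by (rule from_nat_into[OF Cne])
    have ex: "\<exists>k. x \<in> star {e n k} (\<U> n)" if "x \<in> topspace X" for x n
    proof -
      have "x \<in> star (C n) (\<U> n)" using that C(3)[of n] by simp
      then obtain V c where "V \<in> \<U> n" "x \<in> V" "c \<in> V" "c \<in> C n"
        unfolding star_mem by blast
      moreover obtain k where "e n k = c" using from_nat_into_surj[OF C(2) \<open>c \<in> C n\<close>]
        unfolding e_def by blast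
      ultimately have "x \<in> star {e n k} (\<U> n)" unfolding star_mem by blast
      then show ?thesis by blast
    qed
    define f where "f x = (\<lambda>n. LEAST k. x \<in> star {e n k} (\<U> n))" for x
    have fx: "x \<in> star {e n (f x n)} (\<U> n)" if "x \<in> topspace X" for x n
      unfolding f_def using ex[OF that] by (rule LeastI_ex)
    have lep: "f ` Y \<lesssim> Y" by (rule image_lepoll)
    have nb: "\<not> bounded_family (f ` Y) \<longrightarrow> \<not> (f ` Y \<lesssim> Y)"
      using assms(9) unfolding card_less_bounding_number_def by (rule spec)
    have "bounded_family (f ` Y)" using nb lep by meson
    then obtain g where g0: "\<forall>h\<in>f ` Y. \<forall>\<^sub>F n in sequentially. h n \<le> g n"
      unfolding bounded_family_def by (elim exE) 
    have g: "\<forall>\<^sub>F n in sequentially. f y n \<le> g n" if "y \<in> Y" for y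
      using g0 that by simp
    obtain \<K> where K: "countable \<K>" "\<And>K. K \<in> \<K> \<Longrightarrow> compactin X K" "Z = \<Union>\<K>"
      using assms(5) unfolding sigma_compact_in_def by blast
    define Ks where "Ks m = (if \<K> = {} then {} else from_nat_into \<K> m)" for m
    have Ksc: "compactin X (Ks m)" for m
      unfolding Ks_def using K(2) from_nat_into[of \<K>] by (cases "\<K> = {}") simp_all
    have Zs: "\<exists>m. z \<in> Ks m" if "z \<in> Z" for z
    proof -
      from that K(3) obtain Q where "Q \<in> \<K>" "z \<in> Q" by blast
      then obtain m where "from_nat_into \<K> m = Q" using from_nat_into_surj[OF K(1)] by blast
      then show ?thesis using \<open>Q \<in> \<K>\<close> \<open>z \<in> Q\<close> unfolding Ks_def by auto
    qed
    have "\<forall>p. \<exists>G. finite G \<and> G \<subseteq> D (fst p) \<and> Ks (snd p) \<subseteq> star G (\<U> (fst p))"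
    proof (intro allI)
      fix p :: "nat \<times> nat" obtain n m where p: "p = (n,m)" by fastforce
      have "\<exists>G. finite G \<and> G \<subseteq> D n \<and> Ks m \<subseteq> star G (\<U> n)"
      proof (rule compact_star[OF Ksc[of m]])
        show "open_cover_of X (\<U> n)" using H by simp
        show "dense_in X (D n)" using H by simp
      qed
      then show "\<exists>G. finite G \<and> G \<subseteq> D (fst p) \<and> Ks (snd p) \<subseteq> star G (\<U> (fst p))"
        using p by simp
    qed
    from choice[OF this] obtain G0 where G0:
      "\<forall>p. finite (G0 p) \<and> G0 p \<subseteq> D (fst p) \<and> Ks (snd p) \<subseteq> star (G0 p) (\<U> (fst p))"
      by blast
    define G where "G n m = G0 (n,m)" for n m
    have G: "\<And>n m. finite (G n m)" "\<And>n m. G n m \<subseteq> D n"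
      "\<And>n m. Ks m \<subseteq> star (G n m) (\<U> n)" unfolding G_def using G0 by auto
    define F where "F n = e n ` {..g n} \<union> (\<Union>m\<le>n. G n m)" for n
    show ?thesis
    proof (rule exI[of _ F], intro conjI allI ballI)
      fix n
      show "finite (F n)" unfolding F_def using G(1) by auto
      have "e n ` {..g n} \<subseteq> D n" using eC C(1) by blast
      moreover have "(\<Union>m\<le>n. G n m) \<subseteq> D n" using G(2) by blast
      ultimately show "F n \<subseteq> D n" unfolding F_def by (rule Un_least)
    next
      fix x assume x: "x \<in> topspace X"
      show "\<forall>\<^sub>F n in sequentially. x \<in> star (F n) (\<U> n)"
      proof (cases "x \<in> Y")
        case True
        show ?thesis using g[OF True]
        proof (rule eventually_mono)
          fix n assume "f x n \<le> g n"
          then have "{e n (f x n)} \<subseteq> F n" unfolding F_def by auto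
          then show "x \<in> star (F n) (\<U> n)" using fx[OF x, of n] star_mono by blast
        qed
      next
        case False
        then have "x \<in> Z" using x assms(3) by blast
        then obtain m where m: "x \<in> Ks m" using Zs by blast
        show ?thesis
        proof (rule eventually_sequentiallyI[of m])
          fix n assume "m \<le> n"
          then have "G n m \<subseteq> F n" unfolding F_def by auto
          then show "x \<in> star (F n) (\<U> n)" using G(3)[of m n] m star_mono by blast
        qed
      qed
    qed
  qed
qed

end
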